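(* Let $S=\{x_1,\ldots,x_n\}$ be a factor-closed set of $n$ distinct positive integers, let $m\ge1$, $\boldsymbol\gamma=(\gamma_1,\ldots,\gamma_m)\in\mathbb{N}^m$, $f_1,\ldots,f_{m+1}$ arithmetic functions, and $\xi:\mathbb{N}^m\to\mathbb{C}$ an arbitrary function. Let $I=\{2,3,\ldots,m+1\}$ if $m$ is even and $I=\{1,2,\ldots,m+1\}$ if $m$ is odd. Then \[ \det_I\bigl(S^{\boldsymbol\gamma,\xi}_{f_1,\ldots,f_{m+1}}(x_{i_1},\ldots,x_{i_{m+1}})\bigr)_{1\le i_1,\ldots,i_{m+1}\le n}=\bigl(f_1(1)\cdots f_m(1)\bigr)^n\prod_{v=1}^n\xi(x_v,\ldots,x_v)\,f_{m+1}^{[\operatorname{lcm}(\gamma_1,\ldots,\gamma_m)]}(x_v). \]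
   Context: A set $S$ of positive integers is factor-closed if every positive divisor of every element of $S$ lies in $S$. An arithmetic function is a map $f:\mathbb{N}\to\mathbb{C}$, with $f(x)=0$ for $x\notin\mathbb{N}$. For $\gamma\in\mathbb{N}$, $a_\gamma(n)=1$ if $n=d^\gamma$ for some $d\in\mathbb{N}$ and $0$ otherwise, and $f^{[\gamma]}(n):=a_\gamma(n)f(n)$. The weighted multiple Ramanujan sum is \[ S^{\boldsymbol\gamma,\xi}_{f_1,\ldots,f_{m+1}}(n_1,\ldots,n_{m+1}):=\sum_{\substack{(d_1,\ldots,d_m)\in\mathbb{N}^m\\ d_j^{\gamma_j}\mid\gcd(n_1,\ldots,n_{j+1})\ (1\le j\le m)}}\xi(d_1^{\gamma_1},\ldots,d_m^{\gamma_m})\,f_1\Bigl(\frac{n_1}{d_1^{\gamma_1}}\Bigr)f_2\Bigl(\frac{d_1^{\gamma_1}}{d_2^{\gamma_2}}\Bigr)\cdots f_m\Bigl(\frac{d_{m-1}^{\gamma_{m-1}}}{d_m^{\gamma_m}}\Bigr)f_{m+1}\bigl(d_m^{\gamma_m}\bigr). \] For a $K$-dimensional matrix $A$ of order $n$ and $J\subseteq\{1,\ldots,K\}$, with $\eta_j=1$ if $j\in J$ and $0$ otherwise, the hyperdeterminant is $\det_JA:=\frac{1}{n!}\sum_{\sigma_1,\ldots,\sigma_K\in\mathfrak{S}_n}\prod_{j=1}^K\mathrm{sgn}(\sigma_j)^{\eta_j}\prod_{v=1}^nA(\sigma_1(v),\ldots,\sigma_K(v))$, $\mathfrak{S}_n$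 the symmetric group on $\{1,\ldots,n\}$. *)

theory Defs
  imports Complex_Main "HOL-Combinatorics.Permutations"
begin

definition factor_closed :: "nat set \<Rightarrow> bool" where
  "factor_closed S \<longleftrightarrow> (\<forall>s\<in>S. \<forall>d. 0 < d \<and> d dvd s \<longrightarrow> d \<in> S)"

text \<open>Evaluation of an arithmetic function at the rational a/b, with the
  convention f(x) = 0 when x is not a positive integer.\<close>
definition arith_at :: "(nat \<Rightarrow> complex) \<Rightarrow> nat \<Rightarrow> nat \<Rightarrow> complex" where
  "arith_at f a b = (if b \<noteq> 0 \<and> a \<noteq> 0 \<and> b dvd a then f (a div b) else 0)"

definition a_pow :: "nat \<Rightarrow> nat \<Rightarrow> complex" where
  "a_pow g k = (if \<exists>d. 0 < d \<and> k = d ^ g then 1 else 0)"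

definition restr_pow :: "nat \<Rightarrow> (nat \<Rightarrow> complex) \<Rightarrow> nat \<Rightarrow> complex" where
  "restr_pow g f k = a_pow g k * f k"

text \<open>Indices: gamma j for j = 1..m,
  f j for j = 1..m+1, arguments ns i for i = 1..m+1; the tuple (d_1,...,d_m)
  is a function on {1..m}; xi takes the list [d_1^gamma_1, ..., d_m^gamma_m].\<close>
definition wmrs :: "nat \<Rightarrow> (nat \<Rightarrow> nat) \<Rightarrow> (nat list \<Rightarrow> complex) \<Rightarrow>
    (nat \<Rightarrow> nat \<Rightarrow> complex) \<Rightarrow> (nat \<Rightarrow> nat) \<Rightarrow> complex" where
  "wmrs m \<gamma> \<xi> f ns =
    (\<Sum>d \<in> {d \<in> {1..m} \<rightarrow>\<^sub>E UNIV. \<forall>j\<in>{1..m}. 0 < d j \<and> d j ^ \<gamma> j dvd Gcd (ns ` {1..j+1})}.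
        \<xi> (map (\<lambda>j. d j ^ \<gamma> j) [1..<m+1])
        * arith_at (f 1) (ns 1) (d 1 ^ \<gamma> 1)
        * (\<Prod>j\<in>{2..m}. arith_at (f j) (d (j-1) ^ \<gamma> (j-1)) (d j ^ \<gamma> j))
        * f (m+1) (d m ^ \<gamma> m))"

text \<open>Hyperdeterminant det_J of a K-dimensional matrix A of order n
  (A takes an index tuple i_1..i_K as a function on {1..K}).\<close>
definition hyperdet :: "nat \<Rightarrow> nat \<Rightarrow> nat set \<Rightarrow> ((nat \<Rightarrow> nat) \<Rightarrow> complex) \<Rightarrow> complex" where
  "hyperdet K n J A = (1 / of_nat (fact n)) *
     (\<Sum>\<sigma> \<in> {1..K} \<rightarrow>\<^sub>E {p. p permutes {1..n}}.
        (\<Prod>j\<in>{1..K}. if j \<in> J then of_int (sign (\<sigma> j)) else 1) *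
        (\<Prod>v\<in>{1..n}. A (\<lambda>j. \<sigma> j v)))"

end

theory Submission
  imports Defs "HOL-Computational_Algebra.Nth_Powers"
begin

lemma order_eq:
  fixes w :: "nat \<Rightarrow> nat"
  assumes "finite A" "a permutes A" "b permutes A" "\<forall>v\<in>A. w (a v) \<le> w (b v)"
  shows "\<forall>v\<in>A. w (a v) = w (b v)"
proof (rule ccontr)
  assume "\<not> ?thesis"
  then obtain u where "u\<in>A" "w (a u) < w (b u)" using assms(4) by force
  hence "(\<Sum>v\<in>A. w (a v)) < (\<Sum>v\<in>A. w (b v))"
    by (intro sum_strict_mono_ex1) (use assms in auto)
  moreover have "(\<Sum>v\<in>A. w (a v)) = sum w A"
    using sum.permute[OF assms(2), of w] by (simp add: comp_def)
  moreover have "(\<Sum>v\<in>A. w (b v)) = sum w A"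
    using sum.permute[OF assms(3), of w] by (simp add: comp_def)
  ultimately show False by simp
qed

lemma perm_eq:
  assumes "p permutes A" "q permutes A" "\<forall>v\<in>A. p v = q v"
  shows "p = q"
  using assms unfolding permutes_def by (metis ext)

lemma alt_zero:
  fixes M :: "nat \<Rightarrow> nat \<Rightarrow> complex"
  assumes "finite N" "v1\<in>N" "v2\<in>N" "v1\<noteq>v2" "\<tau> v1 = \<tau> v2"
  shows "(\<Sum>\<pi>\<in>{p. p permutes N}. of_int (sign \<pi>) * (\<Prod>v\<in>N. M (\<pi> v) (\<tau> v))) = 0"
proof -
  define t where "t = Transposition.transpose v1 v2"
  define g where "g = (\<lambda>\<pi>. of_int (sign \<pi>) * (\<Prod>v\<in>N. M (\<pi> v) (\<tau> v)) :: complex)"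
  define P where "P = {p. p permutes N}"
  have tp: "t permutes N" unfolding t_def using assms(2,3) by (rule permutes_swap_id)
  have tt: "t \<circ> t = id" unfolding t_def by simp
  have cancel: "\<And>a. a \<circ> t \<circ> t = a" by (simp add: comp_assoc tt)
  have memb: "\<And>a. a \<in> P \<Longrightarrow> a \<circ> t \<in> P" using permutes_compose[OF tp] by (simp add: P_def)
  have "sum g P = sum (\<lambda>\<pi>. g (\<pi> \<circ> t)) P"
    by (rule sum.reindex_bij_witness[of _ "\<lambda>\<pi>. \<pi> \<circ> t" "\<lambda>\<pi>. \<pi> \<circ> t"])
       (simp_all only: cancel memb)
  also have "\<dots> = sum (\<lambda>\<pi>. - g \<pi>) P"
  proof (rule sum.cong[OF refl])
    fix \<pi> assume "\<pi> \<in> P"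
    hence pp: "\<pi> permutes N" by (simp add: P_def)
    have "sign (\<pi> \<circ> t) = - sign \<pi>"
      using sign_compose[OF permutes_imp_permutation[OF assms(1) pp] permutes_imp_permutation[OF assms(1) tp]]
      by (simp add: t_def sign_swap_id assms)
    moreover have "(\<Prod>v\<in>N. M (\<pi> v) (\<tau> v)) = (\<Prod>v\<in>N. M (\<pi> (t v)) (\<tau> (t v)))"
      using prod.permute[OF tp, of "\<lambda>v. M (\<pi> v) (\<tau> v)"] by (simp add: comp_def)
    moreover have "\<And>v. \<tau> (t v) = \<tau> v" unfolding t_def using assms(5)
      by (simp add: transpose_def)
    ultimately show "g (\<pi> \<circ> t) = - g \<pi>" unfolding g_def by simp
  qed
  finally have "sum g P = - sum g P" by (simp add: sum_negf)
  thus ?thesis unfolding g_def P_def by simp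
qed


definition VV :: "(nat \<Rightarrow> nat) \<Rightarrow> nat \<Rightarrow> nat \<Rightarrow> complex" where
  "VV x a b = (if x b dvd x a then 1 else 0)"

lemma D_perm:
  assumes "finite N" "inj_on x N" "\<forall>v\<in>N. 0 < x v" "p permutes N" "\<forall>v\<in>N. \<tau> v = p v"
  shows "(\<Sum>\<pi>\<in>{p. p permutes N}. of_int (sign \<pi>) * (\<Prod>v\<in>N. VV x (\<pi> v) (\<tau> v))) = (of_int (sign p) :: complex)"
proof -
  define F where "F = (\<lambda>\<pi>. of_int (sign \<pi>) * (\<Prod>v\<in>N. VV x (\<pi> v) (\<tau> v)) :: complex)"
  define P where "P = {p. p permutes N}"
  have fin: "finite P" unfolding P_def using assms(1) by (rule finite_permutations)
  have pP: "p \<in> P" using assms(4) by (simp add: P_def)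
  have z: "F \<pi> = 0" if "\<pi> \<in> P - {p}" for \<pi>
  proof (rule ccontr)
    assume nz: "F \<pi> \<noteq> 0"
    have pi: "\<pi> permutes N" using that by (simp add: P_def)
    have "(\<Prod>v\<in>N. VV x (\<pi> v) (\<tau> v)) \<noteq> 0" using nz unfolding F_def by auto
    hence "\<forall>v\<in>N. VV x (\<pi> v) (\<tau> v) \<noteq> 0" using assms(1) by (simp add: prod_zero_iff)
    hence "\<forall>v\<in>N. x (p v) dvd x (\<pi> v)" using assms(5) by (simp add: VV_def split: if_splits)
    moreover have "\<forall>v\<in>N. 0 < x (\<pi> v)" using assms(3) permutes_in_image[OF pi] by simp
    ultimately have "\<forall>v\<in>N. x (p v) \<le> x (\<pi> v)" by (simp add: dvd_imp_le)
    hence eqx: "\<forall>v\<in>N. x (p v) = x (\<pi> v)" using order_eq[OF assms(1,4) pi] by blast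
    have "\<forall>v\<in>N. p v = \<pi> v"
    proof
      fix v assume "v \<in> N"
      thus "p v = \<pi> v" using inj_onD[OF assms(2) eqx[rule_format, OF \<open>v\<in>N\<close>]]
        permutes_in_image[OF pi] permutes_in_image[OF assms(4)] by simp
    qed
    hence "p = \<pi>" using perm_eq[OF assms(4) pi] by blast
    thus False using that by simp
  qed
  have "sum F P = F p + sum F (P - {p})" using sum.remove[OF fin pP] by simp
  also have "sum F (P - {p}) = 0" using z by (simp add: sum.neutral)
  also have "F p = of_int (sign p)" unfolding F_def using assms(5)
    by (simp add: VV_def)
  finally show ?thesis unfolding F_def P_def by simp
qed

lemma chain_dvd:
  fixes e :: "nat \<Rightarrow> nat"
  assumes "\<forall>j\<in>{2..m}. e j dvd e (j-1)"
  shows "1 \<le> l \<Longrightarrow> l \<le> j \<Longrightarrow> j \<le> m \<Longrightarrow> e j dvd e l"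
proof (induction j)
  case 0 thus ?case by simp
next
  case (Suc j)
  show ?case
  proof (cases "l = Suc j")
    case True thus ?thesis by simp
  next
    case False
    hence "e j dvd e l" using Suc by simp
    moreover have "Suc j \<in> {2..m}" using Suc False by auto
    hence "e (Suc j) dvd e (Suc j - 1)" using assms by blast
    hence "e (Suc j) dvd e j" by simp
    ultimately show ?thesis by (rule dvd_trans[rotated])
  qed
qed

definition Phi :: "nat \<Rightarrow> (nat \<Rightarrow> nat) \<Rightarrow> (nat list \<Rightarrow> complex) \<Rightarrow> (nat \<Rightarrow> nat \<Rightarrow> complex)
   \<Rightarrow> (nat \<Rightarrow> nat) \<Rightarrow> nat \<Rightarrow> (nat \<Rightarrow> nat) \<Rightarrow> complex" where
  "Phi m \<gamma> \<xi> f x a k = (if \<forall>j\<in>{1..m}. \<exists>d>0. x (k (j+1)) = d ^ \<gamma> j then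
      \<xi> (map (\<lambda>j. x (k (j+1))) [1..<m+1]) * arith_at (f 1) (x a) (x (k 2))
      * (\<Prod>j\<in>{2..m}. arith_at (f j) (x (k j)) (x (k (j+1)))) * f (m+1) (x (k (m+1))) else 0)"

lemma arith_at_nz: "arith_at g a b \<noteq> 0 \<Longrightarrow> b dvd a"
  by (auto simp: arith_at_def split: if_splits)

lemma Phi_chain:
  assumes "Phi m \<gamma> \<xi> f x a k \<noteq> 0"
  shows "x (k 2) dvd x a"
    and "\<And>l j. 1 \<le> l \<Longrightarrow> l \<le> j \<Longrightarrow> j \<le> m \<Longrightarrow> x (k (j+1)) dvd x (k (l+1))"
    and "\<And>j. 1 \<le> j \<Longrightarrow> j \<le> m \<Longrightarrow> x (k (j+1)) dvd x a"
proof -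
  have a1: "arith_at (f 1) (x a) (x (k 2)) \<noteq> 0"
   and a2: "(\<Prod>j\<in>{2..m}. arith_at (f j) (x (k j)) (x (k (j+1)))) \<noteq> 0"
    using assms unfolding Phi_def by (auto split: if_splits)
  show k2: "x (k 2) dvd x a" using arith_at_nz[OF a1] .
  have "\<forall>j\<in>{2..m}. x (k (j+1)) dvd x (k j)"
    using a2 by (auto dest: arith_at_nz)
  hence ch: "\<forall>j\<in>{2..m}. (\<lambda>j. x (k (j+1))) j dvd (\<lambda>j. x (k (j+1))) (j-1)"
    by auto
  show "\<And>l j. 1 \<le> l \<Longrightarrow> l \<le> j \<Longrightarrow> j \<le> m \<Longrightarrow> x (k (j+1)) dvd x (k (l+1))"
    using chain_dvd[OF ch] by blast
  show "\<And>j. 1 \<le> j \<Longrightarrow> j \<le> m \<Longrightarrow> x (k (j+1)) dvd x a"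
  proof -
    fix j assume "1 \<le> j" "j \<le> m"
    hence "x (k (j+1)) dvd x (k (1+1))" using chain_dvd[OF ch, of 1 j] by simp
    thus "x (k (j+1)) dvd x a" using k2 by (simp add: numeral_2_eq_2 dvd_trans)
  qed
qed


lemma claimR:
  assumes inj: "inj_on x N" and pos: "\<forall>v\<in>N. 0 < x v" and fc: "factor_closed (x ` N)"
    and gam: "\<forall>j\<in>{1..m}. 1 \<le> \<gamma> j" and m1: "1 \<le> m"
    and iN: "\<forall>j\<in>{1..m+1}. i j \<in> N" and finN: "finite N"
  shows "wmrs m \<gamma> \<xi> f (\<lambda>k. x (i k)) =
    (\<Sum>k\<in>{2..m+1} \<rightarrow>\<^sub>E N. Phi m \<gamma> \<xi> f x (i 1) k * (\<Prod>j\<in>{2..m+1}. VV x (i j) (k j)))"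
proof -
  define ns where "ns = (\<lambda>k. x (i k))"
  define KK where "KK = {2..m+1} \<rightarrow>\<^sub>E N"
  define Dset where "Dset = {d \<in> {1..m} \<rightarrow>\<^sub>E UNIV. \<forall>j\<in>{1..m}. 0 < d j \<and> d j ^ \<gamma> j dvd Gcd (ns ` {1..j+1})}"
  define Kset where "Kset = {k \<in> KK. \<forall>j\<in>{1..m}. (\<exists>d>0. x (k (j+1)) = d ^ \<gamma> j) \<and> x (k (j+1)) dvd Gcd (ns ` {1..j+1})}"
  define F where "F = (\<lambda>d. \<xi> (map (\<lambda>j. d j ^ \<gamma> j) [1..<m+1])
        * arith_at (f 1) (ns 1) (d 1 ^ \<gamma> 1)
        * (\<Prod>j\<in>{2..m}. arith_at (f j) (d (j-1) ^ \<gamma> (j-1)) (d j ^ \<gamma> j))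
        * f (m+1) (d m ^ \<gamma> m))"
  have i1: "i 1 \<in> N" using iN m1 by auto
  have "(\<Sum>k\<in>KK. Phi m \<gamma> \<xi> f x (i 1) k * (\<Prod>j\<in>{2..m+1}. VV x (i j) (k j)))
        = (\<Sum>k\<in>Kset. Phi m \<gamma> \<xi> f x (i 1) k)"
  proof (rule sum.mono_neutral_cong_right)
    show "finite KK" unfolding KK_def using finN by (simp add: finite_PiE)
    show "Kset \<subseteq> KK" unfolding Kset_def by auto
  next
    show "\<forall>k\<in>KK - Kset. Phi m \<gamma> \<xi> f x (i 1) k * (\<Prod>j\<in>{2..m+1}. VV x (i j) (k j)) = 0"
    proof
      fix k assume kk: "k \<in> KK - Kset"
      show "Phi m \<gamma> \<xi> f x (i 1) k * (\<Prod>j\<in>{2..m+1}. VV x (i j) (k j)) = 0"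
      proof (rule ccontr)
        assume nz: "Phi m \<gamma> \<xi> f x (i 1) k * (\<Prod>j\<in>{2..m+1}. VV x (i j) (k j)) \<noteq> 0"
        hence ph: "Phi m \<gamma> \<xi> f x (i 1) k \<noteq> 0" by (metis mult_zero_left)
        have "(\<Prod>j\<in>{2..m+1}. VV x (i j) (k j)) \<noteq> 0" using nz by (metis mult_zero_right)
        hence "\<forall>j\<in>{2..m+1}. VV x (i j) (k j) \<noteq> 0"
          by (metis (no_types, lifting) finite_atLeastAtMost prod_zero_iff)
        hence vv: "\<forall>j\<in>{2..m+1}. x (k j) dvd x (i j)" by (simp add: VV_def split: if_splits)
        have pw: "\<forall>j\<in>{1..m}. \<exists>d>0. x (k (j+1)) = d ^ \<gamma> j"
        proof (rule ccontr)
          assume a: "\<not> (\<forall>j\<in>{1..m}. \<exists>d>0. x (k (j+1)) = d ^ \<gamma> j)"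
          have "Phi m \<gamma> \<xi> f x (i 1) k = 0" unfolding Phi_def using a by (rule if_not_P)
          thus False using ph by contradiction
        qed
        have "\<forall>j\<in>{1..m}. x (k (j+1)) dvd Gcd (ns ` {1..j+1})"
        proof
          fix j assume j: "j \<in> {1..m}"
          show "x (k (j+1)) dvd Gcd (ns ` {1..j+1})"
            unfolding dvd_Gcd_iff
          proof
            fix y assume "y \<in> ns ` {1..j+1}"
            then obtain l where l: "l \<in> {1..j+1}" "y = ns l" by auto
            show "x (k (j+1)) dvd y"
            proof (cases "l = 1")
              case True thus ?thesis using Phi_chain(3)[OF ph, of j] j l by (simp add: ns_def)
            next
              case False
              define l' where "l' = l - 1"
              have l': "l = l' + 1" "1 \<le> l'" "l' \<le> j" using l False unfolding l'_def by auto
              have "x (k (j+1)) dvd x (k (l'+1))" using Phi_chain(2)[OF ph, of l' j] l' j by simp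
              moreover have "x (k (l'+1)) dvd x (i (l'+1))" using vv l' j by simp
              ultimately show ?thesis using l l' by (simp add: ns_def dvd_trans)
            qed
          qed
        qed
        hence "k \<in> Kset" using pw kk unfolding Kset_def by auto
        thus False using kk by simp
      qed
    qed
  next
    fix k assume k: "k \<in> Kset"
    have "\<forall>j\<in>{2..m+1}. VV x (i j) (k j) = 1"
    proof
      fix j assume j: "j \<in> {2..m+1}"
      hence "j - 1 \<in> {1..m}" by auto
      hence "x (k (j - 1 + 1)) dvd Gcd (ns ` {1..j - 1 +1})" using k unfolding Kset_def by blast
      hence "x (k j) dvd Gcd (ns ` {1..j})" using j by simp
      hence "x (k j) dvd ns j" using j by (simp add: dvd_Gcd_iff)
      thus "VV x (i j) (k j) = 1" by (simp add: VV_def ns_def)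
    qed
    thus "Phi m \<gamma> \<xi> f x (i 1) k * (\<Prod>j\<in>{2..m+1}. VV x (i j) (k j)) = Phi m \<gamma> \<xi> f x (i 1) k"
      by simp
  qed
  also have "(\<Sum>k\<in>Kset. Phi m \<gamma> \<xi> f x (i 1) k) = sum F Dset"
  proof -
    define \<phi> where "\<phi> = (\<lambda>d. \<lambda>j. if j \<in> {2..m+1} then inv_into N x (d (j-1) ^ \<gamma> (j-1)) else undefined)"
    define \<psi> where "\<psi> = (\<lambda>k. \<lambda>j. if j \<in> {1..m} then nth_root_nat (\<gamma> j) (x (k (j+1))) else undefined)"
    have inS: "d j ^ \<gamma> j \<in> x ` N" if "d \<in> Dset" "j \<in> {1..m}" for d j
    proof -
      have a: "d j ^ \<gamma> j dvd Gcd (ns ` {1..j+1})" and b: "0 < d j" using that unfolding Dset_def by auto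
      have "1 \<in> {1..j+1}" by simp
      hence "d j ^ \<gamma> j dvd ns 1" using a by (simp add: dvd_Gcd_iff)
      moreover have "ns 1 \<in> x ` N" using i1 ns_def by simp
      moreover have "0 < d j ^ \<gamma> j" using b by simp
      ultimately show ?thesis using fc unfolding factor_closed_def by blast
    qed
    have xphi: "x (\<phi> d (j+1)) = d j ^ \<gamma> j" if "d \<in> Dset" "j \<in> {1..m}" for d j
    proof -
      have "\<phi> d (j+1) = inv_into N x (d j ^ \<gamma> j)" using that unfolding \<phi>_def by auto
      thus ?thesis using f_inv_into_f[OF inS[OF that]] by simp
    qed
    have phiN: "\<phi> d j \<in> N" if "d \<in> Dset" "j \<in> {2..m+1}" for d j
    proof -
      have "j - 1 \<in> {1..m}" using that by auto
      hence "inv_into N x (d (j-1) ^ \<gamma> (j-1)) \<in> N" using inS[OF that(1)] by (simp add: inv_into_into)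
      thus ?thesis using that unfolding \<phi>_def by simp
    qed
    have gpos: "0 < \<gamma> j" if "j \<in> {1..m}" for j
    proof -
      have "1 \<le> \<gamma> j" using gam that by blast
      thus ?thesis by simp
    qed
    have Kpow: "\<exists>d>0. x (k (j+1)) = d ^ \<gamma> j" "x (k (j+1)) dvd Gcd (ns ` {1..j+1})"
      if "k \<in> Kset" "j \<in> {1..m}" for k j using that unfolding Kset_def by auto
    have psiv: "\<psi> k j ^ \<gamma> j = x (k (j+1))" "0 < \<psi> k j" if kj: "k \<in> Kset" "j \<in> {1..m}" for k j
    proof -
      obtain d where d: "d > 0" "x (k (j+1)) = d ^ \<gamma> j" using Kpow(1)[OF kj] by blast
      have "\<psi> k j = d" unfolding \<psi>_def using kj d gpos[OF kj(2)] by simp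
      thus "\<psi> k j ^ \<gamma> j = x (k (j+1))" "0 < \<psi> k j" using d by auto
    qed
    have KK_mem: "k \<in> KK" if "k \<in> Kset" for k using that unfolding Kset_def by auto
    show ?thesis
    proof (rule sum.reindex_bij_witness[symmetric, where i=\<psi> and j=\<phi>])
      fix a assume a: "a \<in> Dset"
      have aP: "a \<in> {1..m} \<rightarrow>\<^sub>E UNIV" using a unfolding Dset_def by auto
      show "\<psi> (\<phi> a) = a"
      proof
        fix j show "\<psi> (\<phi> a) j = a j"
        proof (cases "j \<in> {1..m}")
          case True
          thus ?thesis unfolding \<psi>_def using xphi[OF a True] gpos[OF True] by simp
        next
          case False
          thus ?thesis unfolding \<psi>_def using PiE_arb[OF aP False] by (simp only: if_not_P if_False)
        qed
      qed
      show "\<phi> a \<in> Kset"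
        unfolding Kset_def KK_def
      proof (intro CollectI conjI ballI)
        show "\<phi> a \<in> {2..m + 1} \<rightarrow>\<^sub>E N"
          using phiN[OF a] unfolding PiE_iff extensional_def by (auto simp: \<phi>_def)
      next
        fix j assume j: "j \<in> {1..m}"
        have "0 < a j" using a j unfolding Dset_def by auto
        thus "\<exists>d>0. x (\<phi> a (j + 1)) = d ^ \<gamma> j" using xphi[OF a j] by blast
        show "x (\<phi> a (j + 1)) dvd Gcd (ns ` {1..j + 1})" using xphi[OF a j] a j unfolding Dset_def by auto
      qed
      have cond: "\<forall>j\<in>{1..m}. \<exists>d>0. x (\<phi> a (j+1)) = d ^ \<gamma> j"
      proof
        fix j assume j: "j \<in> {1..m}"
        have "0 < a j" using a j unfolding Dset_def by auto
        thus "\<exists>d>0. x (\<phi> a (j + 1)) = d ^ \<gamma> j" using xphi[OF a j] by blast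
      qed
      have e1: "map (\<lambda>j. x (\<phi> a (j+1))) [1..<m+1] = map (\<lambda>j. a j ^ \<gamma> j) [1..<m+1]"
        by (rule map_cong[OF refl]) (use xphi[OF a] in auto)
      have e2: "x (\<phi> a 2) = a 1 ^ \<gamma> 1" using xphi[OF a, of 1] m1 by (simp add: numeral_2_eq_2)
      have e3: "(\<Prod>j\<in>{2..m}. arith_at (f j) (x (\<phi> a j)) (x (\<phi> a (j+1))))
              = (\<Prod>j\<in>{2..m}. arith_at (f j) (a (j-1) ^ \<gamma> (j-1)) (a j ^ \<gamma> j))"
      proof (rule prod.cong[OF refl])
        fix j assume j: "j \<in> {2..m}"
        have j1: "j - 1 \<in> {1..m}" using j by auto
        have "x (\<phi> a (j - 1 + 1)) = a (j-1) ^ \<gamma> (j-1)" by (rule xphi[OF a j1])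
        moreover have "x (\<phi> a (j + 1)) = a j ^ \<gamma> j" using xphi[OF a, of j] j by auto
        ultimately show "arith_at (f j) (x (\<phi> a j)) (x (\<phi> a (j+1))) = arith_at (f j) (a (j-1) ^ \<gamma> (j-1)) (a j ^ \<gamma> j)"
          using j by simp
      qed
      have e4: "x (\<phi> a (m+1)) = a m ^ \<gamma> m" using xphi[OF a, of m] m1 by simp
      show "Phi m \<gamma> \<xi> f x (i 1) (\<phi> a) = F a"
      proof -
        have "Phi m \<gamma> \<xi> f x (i 1) (\<phi> a) = \<xi> (map (\<lambda>j. x (\<phi> a (j+1))) [1..<m+1]) * arith_at (f 1) (x (i 1)) (x (\<phi> a 2))
          * (\<Prod>j\<in>{2..m}. arith_at (f j) (x (\<phi> a j)) (x (\<phi> a (j+1)))) * f (m+1) (x (\<phi> a (m+1)))"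
          unfolding Phi_def using cond by (rule if_P)
        also have "\<dots> = F a" by (simp only: e1 e2 e3 e4 F_def ns_def)
        finally show ?thesis .
      qed
    next
      fix b assume b: "b \<in> Kset"
      have bP: "b \<in> {2..m+1} \<rightarrow>\<^sub>E N" using KK_mem[OF b] unfolding KK_def .
      show "\<phi> (\<psi> b) = b"
      proof
        fix j show "\<phi> (\<psi> b) j = b j"
        proof (cases "j \<in> {2..m+1}")
          case True
          hence j1: "j - 1 \<in> {1..m}" by auto
          have "\<psi> b (j-1) ^ \<gamma> (j-1) = x (b j)" using psiv(1)[OF b j1] True by simp
          moreover have "b j \<in> N" using bP True by auto
          ultimately show ?thesis unfolding \<phi>_def using True inv_into_f_f[OF inj] by simp
        next
          case False
          thus ?thesis unfolding \<phi>_def using PiE_arb[OF bP False] by (simp only: if_not_P if_False)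
        qed
      qed
      show "\<psi> b \<in> Dset"
        unfolding Dset_def
      proof (intro CollectI conjI ballI)
        show "\<psi> b \<in> {1..m} \<rightarrow>\<^sub>E UNIV" unfolding PiE_iff extensional_def by (auto simp: \<psi>_def)
      next
        fix j assume j: "j \<in> {1..m}"
        show "0 < \<psi> b j" using psiv(2)[OF b j] .
        show "\<psi> b j ^ \<gamma> j dvd Gcd (ns ` {1..j + 1})" using psiv(1)[OF b j] Kpow(2)[OF b j] by simp
      qed
    qed
  qed
  also have "sum F Dset = wmrs m \<gamma> \<xi> f (\<lambda>k. x (i k))"
    unfolding wmrs_def F_def Dset_def ns_def by simp
  finally show ?thesis unfolding KK_def by simp
qed


lemma isp_iff:
  assumes "0 < g" "0 < (y::nat)"
  shows "(\<exists>d>0. y = d ^ g) \<longleftrightarrow> is_nth_power g y"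
proof
  assume "\<exists>d>0. y = d ^ g" thus "is_nth_power g y" by (auto intro: is_nth_powerI)
next
  assume "is_nth_power g y"
  then obtain d where d: "y = d ^ g" by (auto elim: is_nth_powerE)
  have "d \<noteq> 0" using d assms by (metis power_0_left less_not_refl2 gr_implies_not0)
  thus "\<exists>d>0. y = d ^ g" using d by blast
qed

lemma pow_lcm:
  assumes "0 < (y::nat)" "finite G" "\<forall>g\<in>G. 0 < g"
  shows "(\<forall>g\<in>G. \<exists>d>0. y = d ^ g) \<longleftrightarrow> (\<exists>d>0. y = d ^ Lcm G)"
proof -
  have L0: "0 < Lcm G" using assms(2,3) Lcm_0_iff_nat[OF assms(2)] by (metis gr0I less_irrefl)
  have "(\<forall>g\<in>G. \<exists>d>0. y = d ^ g) \<longleftrightarrow> (\<forall>g\<in>G. \<forall>p. prime p \<longrightarrow> g dvd multiplicity p y)"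
    using isp_iff[OF _ assms(1)] is_nth_power_conv_multiplicity_nat assms(3) by simp
  also have "\<dots> \<longleftrightarrow> (\<forall>p. prime p \<longrightarrow> Lcm G dvd multiplicity p y)"
    by (auto simp: Lcm_dvd_iff)
  also have "\<dots> \<longleftrightarrow> (\<exists>d>0. y = d ^ Lcm G)"
    using isp_iff[OF L0 assms(1)] is_nth_power_conv_multiplicity_nat[OF L0] by simp
  finally show ?thesis .
qed

lemma inj_perm:
  assumes "finite N" "inj_on \<tau> N" "\<tau> ` N \<subseteq> N" "\<And>v. v \<notin> N \<Longrightarrow> \<tau> v = v"
  shows "\<tau> permutes N"
proof (rule bij_imp_permutes)
  show "bij_betw \<tau> N N" unfolding bij_betw_def using endo_inj_surj[OF assms(1,3,2)] assms(2) by simp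
qed (use assms(4) in auto)

lemma sign_pow:
  fixes p :: "nat \<Rightarrow> nat"
  shows "(if odd m then (of_int (sign p) :: complex) else 1) * (of_int (sign p)) ^ m = 1"
proof (cases "evenperm p")
  case True thus ?thesis by (simp add: sign_def)
next
  case False thus ?thesis by (cases "even m") (auto simp: sign_def)
qed


theorem corollary4p8:
  fixes n m :: nat and x :: "nat \<Rightarrow> nat" and \<gamma> :: "nat \<Rightarrow> nat"
    and f :: "nat \<Rightarrow> nat \<Rightarrow> complex" and \<xi> :: "nat list \<Rightarrow> complex"
    and I :: "nat set"
  assumes "inj_on x {1..n}"
    and "\<forall>i\<in>{1..n}. 0 < x i"
    and "factor_closed (x ` {1..n})"
    and "1 \<le> m"
    and "\<forall>j\<in>{1..m}. 1 \<le> \<gamma> j"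
    and "I = (if even m then {2..m+1} else {1..m+1})"
  shows "hyperdet (m+1) n I (\<lambda>i. wmrs m \<gamma> \<xi> f (\<lambda>k. x (i k))) =
    (\<Prod>j\<in>{1..m}. f j 1) ^ n *
    (\<Prod>v\<in>{1..n}. \<xi> (replicate m (x v)) * restr_pow (Lcm (\<gamma> ` {1..m})) (f (m+1)) (x v))"
proof -
  define N where "N = {1..n}"
  have finN: "finite N" and cardN: "card N = n" unfolding N_def by auto
  have inj: "inj_on x N" and pos: "\<forall>v\<in>N. 0 < x v" and fc: "factor_closed (x ` N)"
    using assms unfolding N_def by auto
  have m1: "1 \<le> m" and gam: "\<forall>j\<in>{1..m}. 1 \<le> \<gamma> j" using assms by auto
  define P where "P = {p. p permutes N}"
  have finP: "finite P" unfolding P_def using finN by (rule finite_permutations)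
  have cardP: "card P = fact n" unfolding P_def using card_permutations[OF cardN finN] .
  define Ks where "Ks = {2..m+1}"
  have finKs: "finite Ks" and cardKs: "card Ks = m" and Ks1: "1 \<notin> Ks" and twoKs: "2 \<in> Ks"
    unfolding Ks_def using m1 by auto
  have ins: "{1..m+1} = insert 1 Ks" unfolding Ks_def by auto
  define KK where "KK = Ks \<rightarrow>\<^sub>E N"
  define KAP where "KAP = N \<rightarrow>\<^sub>E KK"
  define Sig where "Sig = {1..m+1} \<rightarrow>\<^sub>E P"
  define A where "A = (\<lambda>i. wmrs m \<gamma> \<xi> f (\<lambda>k. x (i k)))"
  define Ph where "Ph = Phi m \<gamma> \<xi> f x"
  define s1 where "s1 = (\<lambda>p::nat\<Rightarrow>nat. if odd m then (of_int (sign p)::complex) else 1)"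
  define sg where "sg = (\<lambda>\<sigma>::nat\<Rightarrow>nat\<Rightarrow>nat. (\<Prod>j\<in>{1..m+1}. if j \<in> I then (of_int (sign (\<sigma> j))::complex) else 1))"
  define G1 where "G1 = (\<lambda>\<kappa>::nat\<Rightarrow>nat\<Rightarrow>nat. \<Sum>q\<in>P. s1 q * (\<Prod>v\<in>N. Ph (q v) (\<kappa> v)))"
  define kj where "kj = (\<lambda>(\<kappa>::nat\<Rightarrow>nat\<Rightarrow>nat) j v. if v \<in> N then \<kappa> v j else v)"
  define D where "D = (\<lambda>\<tau>. \<Sum>\<pi>\<in>P. of_int (sign \<pi>) * (\<Prod>v\<in>N. VV x (\<pi> v) (\<tau> v)) :: complex)"
  define k0 where "k0 = (\<lambda>p::nat\<Rightarrow>nat. \<lambda>v\<in>N. \<lambda>j\<in>Ks. p v)"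
  define C where "C = (\<Prod>v\<in>N. Ph v (\<lambda>j\<in>Ks. v))"
  define T where "T = (\<lambda>\<sigma> \<kappa>. \<Prod>v\<in>N. (Ph (\<sigma> (1::nat) v) (\<kappa> v) * (\<Prod>j\<in>Ks. VV x (\<sigma> j v) (\<kappa> v j))))"

  have hd: "hyperdet (m+1) n I A = (1 / of_nat (fact n)) * (\<Sum>\<sigma>\<in>Sig. sg \<sigma> * (\<Prod>v\<in>N. A (\<lambda>j. \<sigma> j v)))"
    unfolding hyperdet_def Sig_def P_def N_def sg_def by simp

  have stepA: "(\<Prod>v\<in>N. A (\<lambda>j. \<sigma> j v)) = (\<Sum>\<kappa>\<in>KAP. T \<sigma> \<kappa>)" if sS: "\<sigma> \<in> Sig" for \<sigma>
  proof -
    have sj: "\<sigma> j permutes N" if "j \<in> {1..m+1}" for j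
      using PiE_mem[OF sS[unfolded Sig_def] that] unfolding P_def by simp
    have "A (\<lambda>j. \<sigma> j v) = (\<Sum>k\<in>KK. Ph (\<sigma> 1 v) k * (\<Prod>j\<in>Ks. VV x (\<sigma> j v) (k j)))"
      if v: "v \<in> N" for v
    proof -
      have iN: "\<forall>j\<in>{1..m+1}. \<sigma> j v \<in> N"
      proof
        fix j assume j: "j \<in> {1..m+1}"
        show "\<sigma> j v \<in> N" using permutes_in_image[OF sj[OF j]] v by simp
      qed
      show ?thesis unfolding A_def Ph_def KK_def Ks_def
        by (rule claimR[OF inj pos fc gam m1 iN finN])
    qed
    hence "(\<Prod>v\<in>N. A (\<lambda>j. \<sigma> j v)) = (\<Prod>v\<in>N. \<Sum>k\<in>KK. Ph (\<sigma> 1 v) k * (\<Prod>j\<in>Ks. VV x (\<sigma> j v) (k j)))"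
      by (rule prod.cong[OF refl])
    also have "\<dots> = (\<Sum>\<kappa>\<in>KAP. \<Prod>v\<in>N. Ph (\<sigma> 1 v) (\<kappa> v) * (\<Prod>j\<in>Ks. VV x (\<sigma> j v) (\<kappa> v j)))"
      unfolding KAP_def by (rule prod_sum_PiE[OF finN]) (simp add: KK_def finN finKs finite_PiE)
    finally show ?thesis unfolding T_def .
  qed
  have stepB: "(\<Sum>\<sigma>\<in>Sig. sg \<sigma> * (\<Prod>v\<in>N. A (\<lambda>j. \<sigma> j v))) = (\<Sum>\<kappa>\<in>KAP. \<Sum>\<sigma>\<in>Sig. sg \<sigma> * T \<sigma> \<kappa>)"
  proof -
    have "(\<Sum>\<sigma>\<in>Sig. sg \<sigma> * (\<Prod>v\<in>N. A (\<lambda>j. \<sigma> j v))) = (\<Sum>\<sigma>\<in>Sig. \<Sum>\<kappa>\<in>KAP. sg \<sigma> * T \<sigma> \<kappa>)"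
      by (rule sum.cong[OF refl]) (simp add: stepA sum_distrib_left)
    also have "\<dots> = (\<Sum>\<kappa>\<in>KAP. \<Sum>\<sigma>\<in>Sig. sg \<sigma> * T \<sigma> \<kappa>)" by (rule sum.swap)
    finally show ?thesis .
  qed
  have I1: "(1 \<in> I) = odd m" using assms(6) by (cases "even m") simp_all
  have IKs: "\<forall>j\<in>Ks. j \<in> I" using assms(6) unfolding Ks_def by (cases "even m") simp_all
  have stepC: "(\<Sum>\<sigma>\<in>Sig. sg \<sigma> * T \<sigma> \<kappa>) = G1 \<kappa> * (\<Prod>j\<in>Ks. D (kj \<kappa> j))" if kK: "\<kappa> \<in> KAP" for \<kappa>
  proof -
    define g where "g = (\<lambda>j p. if j = 1 then s1 p * (\<Prod>v\<in>N. Ph (p v) (\<kappa> v))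
        else of_int (sign p) * (\<Prod>v\<in>N. VV x (p v) (\<kappa> v j)))"
    have eq: "sg \<sigma> * T \<sigma> \<kappa> = (\<Prod>j\<in>{1..m+1}. g j (\<sigma> j))" if "\<sigma> \<in> Sig" for \<sigma>
    proof -
      have "sg \<sigma> = (if 1 \<in> I then of_int (sign (\<sigma> 1)) else 1) * (\<Prod>j\<in>Ks. if j \<in> I then of_int (sign (\<sigma> j)) else 1)"
        unfolding sg_def ins by (rule prod.insert[OF finKs Ks1])
      also have "(\<Prod>j\<in>Ks. if j \<in> I then of_int (sign (\<sigma> j)) else 1) = (\<Prod>j\<in>Ks. (of_int (sign (\<sigma> j)) :: complex))"
        by (rule prod.cong[OF refl]) (use IKs in auto)
      finally have sgeq: "sg \<sigma> = s1 (\<sigma> 1) * (\<Prod>j\<in>Ks. (of_int (sign (\<sigma> j)) :: complex))"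
        unfolding s1_def using I1 by simp
      have Teq: "T \<sigma> \<kappa> = (\<Prod>v\<in>N. Ph (\<sigma> 1 v) (\<kappa> v)) * (\<Prod>j\<in>Ks. \<Prod>v\<in>N. VV x (\<sigma> j v) (\<kappa> v j))"
      proof -
        have sw: "(\<Prod>v\<in>N. \<Prod>j\<in>Ks. VV x (\<sigma> j v) (\<kappa> v j)) = (\<Prod>j\<in>Ks. \<Prod>v\<in>N. VV x (\<sigma> j v) (\<kappa> v j))"
          by (rule prod.swap)
        show ?thesis unfolding T_def prod.distrib sw ..
      qed
      have "(\<Prod>j\<in>{1..m+1}. g j (\<sigma> j)) = g 1 (\<sigma> 1) * (\<Prod>j\<in>Ks. g j (\<sigma> j))"
        unfolding ins by (rule prod.insert[OF finKs Ks1])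
      also have "(\<Prod>j\<in>Ks. g j (\<sigma> j)) = (\<Prod>j\<in>Ks. of_int (sign (\<sigma> j)) * (\<Prod>v\<in>N. VV x (\<sigma> j v) (\<kappa> v j)))"
      proof (rule prod.cong[OF refl])
        fix j assume "j \<in> Ks"
        hence "j \<noteq> 1" using Ks1 by blast
        thus "g j (\<sigma> j) = of_int (sign (\<sigma> j)) * (\<Prod>v\<in>N. VV x (\<sigma> j v) (\<kappa> v j))"
          unfolding g_def by simp
      qed
      also have "\<dots> = (\<Prod>j\<in>Ks. (of_int (sign (\<sigma> j)) :: complex)) * (\<Prod>j\<in>Ks. \<Prod>v\<in>N. VV x (\<sigma> j v) (\<kappa> v j))"
        by (rule prod.distrib)
      finally have gp: "(\<Prod>j\<in>{1..m+1}. g j (\<sigma> j)) = g 1 (\<sigma> 1) *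
         ((\<Prod>j\<in>Ks. (of_int (sign (\<sigma> j)) :: complex)) * (\<Prod>j\<in>Ks. \<Prod>v\<in>N. VV x (\<sigma> j v) (\<kappa> v j)))" .
      have g1: "g 1 (\<sigma> 1) = s1 (\<sigma> 1) * (\<Prod>v\<in>N. Ph (\<sigma> 1 v) (\<kappa> v))" unfolding g_def by simp
      show ?thesis unfolding gp g1 sgeq Teq by (simp only: ac_simps)
    qed
    have "(\<Sum>\<sigma>\<in>Sig. sg \<sigma> * T \<sigma> \<kappa>) = (\<Sum>\<sigma>\<in>Sig. \<Prod>j\<in>{1..m+1}. g j (\<sigma> j))"
      by (rule sum.cong[OF refl]) (rule eq)
    also have "\<dots> = (\<Prod>j\<in>{1..m+1}. \<Sum>p\<in>P. g j p)"
      unfolding Sig_def by (rule prod_sum_PiE[symmetric]) (simp_all add: finP)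
    also have "\<dots> = (\<Sum>p\<in>P. g 1 p) * (\<Prod>j\<in>Ks. \<Sum>p\<in>P. g j p)"
      unfolding ins by (rule prod.insert[OF finKs Ks1])
    also have "(\<Sum>p\<in>P. g 1 p) = G1 \<kappa>" unfolding g_def G1_def by simp
    also have "(\<Prod>j\<in>Ks. \<Sum>p\<in>P. g j p) = (\<Prod>j\<in>Ks. D (kj \<kappa> j))"
    proof (rule prod.cong[OF refl])
      fix j assume "j \<in> Ks"
      hence "j \<noteq> 1" using Ks1 by auto
      have e: "\<And>p. (\<Prod>v\<in>N. VV x (p v) (kj \<kappa> j v)) = (\<Prod>v\<in>N. VV x (p v) (\<kappa> v j))"
        by (rule prod.cong[OF refl]) (simp add: kj_def)
      show "(\<Sum>p\<in>P. g j p) = D (kj \<kappa> j)"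
        unfolding g_def D_def e using \<open>j \<noteq> 1\<close> by simp
    qed
    finally show ?thesis .
  qed
  have k0v: "k0 p v = (\<lambda>j\<in>Ks. p v)" if "v \<in> N" for p v using that unfolding k0_def by simp
  have k0vj: "k0 p v j = p v" if "v \<in> N" "j \<in> Ks" for p v j using that unfolding k0_def by simp
  have Phc: "Ph a k \<noteq> 0 \<Longrightarrow> x (k 2) dvd x a" for a k unfolding Ph_def by (rule Phi_chain(1))
  have Phc3: "Ph a k \<noteq> 0 \<Longrightarrow> 1 \<le> j \<Longrightarrow> j \<le> m \<Longrightarrow> x (k (j+1)) dvd x a" for a k j
    unfolding Ph_def by (rule Phi_chain(3))
  have xle: "x a \<le> x b" if "x a dvd x b" "b \<in> N" for a b
    using that pos by (simp add: dvd_imp_le)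
  have xinj: "a = b" if "x a = x b" "a \<in> N" "b \<in> N" for a b
    using inj that by (simp add: inj_on_eq_iff)
  have stepD: "(\<Sum>\<kappa>\<in>KAP. G1 \<kappa> * (\<Prod>j\<in>Ks. D (kj \<kappa> j))) = (\<Sum>p\<in>P. G1 (k0 p) * (\<Prod>j\<in>Ks. D (kj (k0 p) j)))"
  proof -
    define H where "H = (\<lambda>\<kappa>. G1 \<kappa> * (\<Prod>j\<in>Ks. D (kj \<kappa> j)))"
    have finKAP: "finite KAP" unfolding KAP_def KK_def using finN finKs by (simp add: finite_PiE)
    have k0mem: "k0 p \<in> KAP" if "p \<in> P" for p
    proof -
      have pp: "p permutes N" using that unfolding P_def by simp
      show ?thesis unfolding KAP_def KK_def k0_def PiE_iff extensional_def
        using permutes_in_image[OF pp] by auto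
    qed
    have injk0: "inj_on k0 P"
    proof
      fix p q assume pq: "p \<in> P" "q \<in> P" "k0 p = k0 q"
      have "\<forall>v\<in>N. p v = q v"
      proof
        fix v assume v: "v \<in> N"
        have "k0 p v 2 = k0 q v 2" using pq by simp
        thus "p v = q v" using k0vj[OF v twoKs] by simp
      qed
      thus "p = q" using perm_eq pq unfolding P_def by blast
    qed
    have zero: "H \<kappa> = 0" if kK: "\<kappa> \<in> KAP - k0 ` P" for \<kappa>
    proof -
      have kKAP: "\<kappa> \<in> KAP" using kK by simp
      have kvKK: "\<kappa> v \<in> KK" if "v \<in> N" for v using PiE_mem[OF kKAP[unfolded KAP_def] that] .
      have kv: "\<kappa> v j \<in> N" if "v \<in> N" "j \<in> Ks" for v j
        using PiE_mem[OF kvKK[OF that(1), unfolded KK_def] that(2)] .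
      show ?thesis
      proof (cases "\<exists>j\<in>Ks. \<not> inj_on (kj \<kappa> j) N")
        case True
        then obtain j where j: "j \<in> Ks" "\<not> inj_on (kj \<kappa> j) N" by blast
        then obtain v1 v2 where v: "v1 \<in> N" "v2 \<in> N" "v1 \<noteq> v2" "kj \<kappa> j v1 = kj \<kappa> j v2"
          unfolding inj_on_def by blast
        have "D (kj \<kappa> j) = 0" unfolding D_def P_def by (rule alt_zero[OF finN v])
        hence "(\<Prod>j\<in>Ks. D (kj \<kappa> j)) = 0" using j(1) finKs by (metis prod_zero_iff)
        thus ?thesis unfolding H_def by simp
      next
        case False
        hence injk: "\<forall>j\<in>Ks. inj_on (kj \<kappa> j) N" by blast
        have permk: "kj \<kappa> j permutes N" if j: "j \<in> Ks" for j
        proof (rule inj_perm[OF finN])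
          show "inj_on (kj \<kappa> j) N" using injk j by blast
          show "kj \<kappa> j ` N \<subseteq> N" using kv j unfolding kj_def by auto
          show "\<And>v. v \<notin> N \<Longrightarrow> kj \<kappa> j v = v" unfolding kj_def by simp
        qed
        have "G1 \<kappa> = 0" unfolding G1_def
        proof (rule sum.neutral, rule ballI, rule ccontr)
          fix q assume qP: "q \<in> P" and nz: "s1 q * (\<Prod>v\<in>N. Ph (q v) (\<kappa> v)) \<noteq> 0"
          have qp: "q permutes N" using qP unfolding P_def by simp
          have "(\<Prod>v\<in>N. Ph (q v) (\<kappa> v)) \<noteq> 0" using nz by (metis mult_zero_right)
          hence phv: "\<forall>v\<in>N. Ph (q v) (\<kappa> v) \<noteq> 0" using finN by (metis prod_zero_iff)
          have eqq: "\<forall>v\<in>N. \<kappa> v j = q v" if j: "j \<in> Ks" for j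
          proof -
            have j1: "1 \<le> j - 1" "j - 1 \<le> m" "j - 1 + 1 = j" using j unfolding Ks_def by auto
            have "\<forall>v\<in>N. x (kj \<kappa> j v) \<le> x (q v)"
            proof
              fix v assume v: "v \<in> N"
              have "x (\<kappa> v (j - 1 + 1)) dvd x (q v)" using Phc3[OF phv[rule_format, OF v] j1(1,2)] .
              hence "x (\<kappa> v j) dvd x (q v)" using j1(3) by simp
              thus "x (kj \<kappa> j v) \<le> x (q v)" using xle permutes_in_image[OF qp] v unfolding kj_def by simp
            qed
            hence "\<forall>v\<in>N. x (kj \<kappa> j v) = x (q v)" using order_eq[OF finN permk[OF j] qp] by blast
            thus ?thesis using xinj kv[OF _ j] permutes_in_image[OF qp] unfolding kj_def by auto
          qed
          have "\<kappa> = k0 q"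
          proof
            fix v show "\<kappa> v = k0 q v"
            proof (cases "v \<in> N")
              case True
              show ?thesis
              proof
                fix j show "\<kappa> v j = k0 q v j"
                proof (cases "j \<in> Ks")
                  case True thus ?thesis using eqq \<open>v \<in> N\<close> k0vj by simp
                next
                  case False thus ?thesis using PiE_arb[OF kvKK[OF \<open>v \<in> N\<close>, unfolded KK_def] False]
                    k0v[OF \<open>v \<in> N\<close>] by simp
                qed
              qed
            next
              case False thus ?thesis using PiE_arb[OF kKAP[unfolded KAP_def] False] unfolding k0_def by simp
            qed
          qed
          thus False using kK qP by blast
        qed
        thus ?thesis unfolding H_def by simp
      qed
    qed
    have "sum H KAP = sum H (k0 ` P)"
      by (rule sum.mono_neutral_right[OF finKAP]) (use k0mem zero in auto)
    also have "\<dots> = sum (H \<circ> k0) P" by (rule sum.reindex[OF injk0])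
    finally show ?thesis unfolding H_def by simp
  qed
  have stepE: "G1 (k0 p) * (\<Prod>j\<in>Ks. D (kj (k0 p) j)) = C" if pP: "p \<in> P" for p
  proof -
    have pp: "p permutes N" using pP unfolding P_def by simp
    have "(\<Prod>j\<in>Ks. D (kj (k0 p) j)) = (\<Prod>j\<in>Ks. (of_int (sign p) :: complex))"
    proof (rule prod.cong[OF refl])
      fix j assume j: "j \<in> Ks"
      have "\<forall>v\<in>N. kj (k0 p) j v = p v" using k0vj j unfolding kj_def by simp
      thus "D (kj (k0 p) j) = of_int (sign p)" unfolding D_def P_def
        by (rule D_perm[OF finN inj pos pp])
    qed
    also have "\<dots> = of_int (sign p) ^ m" using cardKs by simp
    finally have Dp: "(\<Prod>j\<in>Ks. D (kj (k0 p) j)) = of_int (sign p) ^ m" .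
    define F where "F = (\<lambda>q. s1 q * (\<Prod>v\<in>N. Ph (q v) (k0 p v)))"
    have z: "F q = 0" if "q \<in> P - {p}" for q
    proof (rule ccontr)
      assume nz: "F q \<noteq> 0"
      have qp: "q permutes N" using that unfolding P_def by simp
      have "(\<Prod>v\<in>N. Ph (q v) (k0 p v)) \<noteq> 0" using nz unfolding F_def by (metis mult_zero_right)
      hence phv: "\<forall>v\<in>N. Ph (q v) (k0 p v) \<noteq> 0" using finN by (metis prod_zero_iff)
      have "\<forall>v\<in>N. x (p v) \<le> x (q v)"
      proof
        fix v assume v: "v \<in> N"
        have "x (k0 p v 2) dvd x (q v)" using Phc[OF phv[rule_format, OF v]] .
        thus "x (p v) \<le> x (q v)" using k0vj[OF v twoKs] xle permutes_in_image[OF qp] v by simp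
      qed
      hence "\<forall>v\<in>N. x (p v) = x (q v)" using order_eq[OF finN pp qp] by blast
      hence "\<forall>v\<in>N. p v = q v" using xinj permutes_in_image[OF qp] permutes_in_image[OF pp] by blast
      hence "p = q" using perm_eq[OF pp qp] by blast
      thus False using that by simp
    qed
    have "G1 (k0 p) = sum F P" unfolding G1_def F_def ..
    also have "\<dots> = F p + sum F (P - {p})" using sum.remove[OF finP pP] by simp
    also have "sum F (P - {p}) = 0" using z by (simp add: sum.neutral)
    also have "F p = s1 p * (\<Prod>v\<in>N. Ph (p v) (\<lambda>j\<in>Ks. p v))"
      unfolding F_def using k0v by (simp cong: prod.cong)
    also have "(\<Prod>v\<in>N. Ph (p v) (\<lambda>j\<in>Ks. p v)) = C"
      unfolding C_def using prod.permute[OF pp, of "\<lambda>v. Ph v (\<lambda>j\<in>Ks. v)"] by (simp add: comp_def)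
    finally have "G1 (k0 p) = s1 p * C" by simp
    thus ?thesis using Dp sign_pow[of m p] unfolding s1_def by (simp add: mult_ac)
  qed
  have stepF: "C = (\<Prod>j\<in>{1..m}. f j 1) ^ n *
    (\<Prod>v\<in>{1..n}. \<xi> (replicate m (x v)) * restr_pow (Lcm (\<gamma> ` {1..m})) (f (m+1)) (x v))"
  proof -
    define L where "L = Lcm (\<gamma> ` {1..m})"
    define c where "c = (\<Prod>j\<in>{1..m}. f j 1)"
    have each: "Ph v (\<lambda>j\<in>Ks. v) = c * (\<xi> (replicate m (x v)) * restr_pow L (f (m+1)) (x v))"
      if v: "v \<in> N" for v
    proof -
      define k where "k = (\<lambda>j\<in>Ks. v)"
      have k1: "k (j+1) = v" if "j \<in> {1..m}" for j using that unfolding k_def Ks_def by simp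
      have k2: "k 2 = v" using twoKs unfolding k_def by simp
      have k3: "k j = v" if "j \<in> {2..m}" for j using that unfolding k_def Ks_def by simp
      have k4: "k (m+1) = v" using m1 unfolding k_def Ks_def by simp
      have xv: "0 < x v" using pos v by simp
      have ar: "arith_at g (x v) (x v) = g 1" for g using xv unfolding arith_at_def by simp
      have gpos: "\<forall>g\<in>\<gamma> ` {1..m}. 0 < g"
      proof
        fix g assume "g \<in> \<gamma> ` {1..m}"
        then obtain j where "j \<in> {1..m}" "g = \<gamma> j" by blast
        thus "0 < g" using gam by fastforce
      qed
      have cond: "(\<forall>j\<in>{1..m}. \<exists>d>0. x (k (j+1)) = d ^ \<gamma> j) \<longleftrightarrow> (\<exists>d>0. x v = d ^ L)"
      proof -
        have "(\<forall>j\<in>{1..m}. \<exists>d>0. x (k (j+1)) = d ^ \<gamma> j) \<longleftrightarrow> (\<forall>g\<in>\<gamma> ` {1..m}. \<exists>d>0. x v = d ^ g)"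
          using k1 by auto
        also have "\<dots> \<longleftrightarrow> (\<exists>d>0. x v = d ^ L)" unfolding L_def
          by (rule pow_lcm[OF xv _ gpos]) simp
        finally show ?thesis .
      qed
      have mp: "map (\<lambda>j. x (k (j+1))) [1..<m+1] = replicate m (x v)"
      proof -
        have "map (\<lambda>j. x (k (j+1))) [1..<m+1] = map (\<lambda>j. x v) [1..<m+1]"
          by (rule map_cong[OF refl]) (use k1 in auto)
        thus ?thesis by (simp add: map_replicate_const)
      qed
      have pr: "(\<Prod>j\<in>{2..m}. arith_at (f j) (x (k j)) (x (k (j+1)))) = (\<Prod>j\<in>{2..m}. f j 1)"
      proof (rule prod.cong[OF refl])
        fix j assume j: "j \<in> {2..m}"
        have "j \<in> {1..m}" using j by auto
        thus "arith_at (f j) (x (k j)) (x (k (j+1))) = f j 1" using k1 k3[OF j] ar by simp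
      qed
      have cc: "c = f 1 1 * (\<Prod>j\<in>{2..m}. f j 1)"
      proof -
        have "{1..m} = insert 1 {2..m}" using m1 by auto
        thus ?thesis unfolding c_def by simp
      qed
      have apow: "a_pow L (x v) = (if \<exists>d>0. x v = d ^ L then 1 else 0)" unfolding a_pow_def by simp
      show ?thesis
      proof (cases "\<exists>d>0. x v = d ^ L")
        case True
        hence "Ph v k = \<xi> (map (\<lambda>j. x (k (j+1))) [1..<m+1]) * arith_at (f 1) (x v) (x (k 2))
          * (\<Prod>j\<in>{2..m}. arith_at (f j) (x (k j)) (x (k (j+1)))) * f (m+1) (x (k (m+1)))"
          unfolding Ph_def Phi_def using cond by simp
        also have "\<dots> = \<xi> (replicate m (x v)) * f 1 1 * (\<Prod>j\<in>{2..m}. f j 1) * f (m+1) (x v)"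
          unfolding mp pr k2 k4 ar ..
        finally show ?thesis unfolding k_def cc restr_pow_def apow using True by (simp add: mult_ac)
      next
        case False
        hence "\<not> (\<forall>j\<in>{1..m}. \<exists>d>0. x (k (j+1)) = d ^ \<gamma> j)" using cond by blast
        hence "Ph v k = 0" unfolding Ph_def Phi_def by (rule if_not_P)
        moreover have "a_pow L (x v) = 0" unfolding apow using False by (simp only: if_False)
        ultimately show ?thesis unfolding k_def restr_pow_def by simp
      qed
    qed
    have "C = (\<Prod>v\<in>N. c * (\<xi> (replicate m (x v)) * restr_pow L (f (m+1)) (x v)))"
      unfolding C_def by (rule prod.cong[OF refl]) (rule each)
    also have "\<dots> = c ^ n * (\<Prod>v\<in>N. \<xi> (replicate m (x v)) * restr_pow L (f (m+1)) (x v))"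
      by (simp add: prod.distrib cardN)
    finally show ?thesis unfolding c_def L_def N_def .
  qed
  have "(\<Sum>\<sigma>\<in>Sig. sg \<sigma> * (\<Prod>v\<in>N. A (\<lambda>j. \<sigma> j v))) = of_nat (fact n) * C"
    using stepB stepC stepD stepE cardP by simp
  hence "hyperdet (m+1) n I A = C" using hd by simp
  thus ?thesis using stepF unfolding A_def by simp
qed

end
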